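(* There exist universal constants $\delta_0 > 0$ and $c > 0$ such that if $\Omega \subset \mathbb{R}^2$ is convex, has area $1$ and satisfies $\mathcal{A}(\Omega) \leq \delta_0$, then $\Omega \subset B$ for some disk $B$ with $$ |B| \leq 1 + c \cdot \mathcal{A}(\Omega)^{1/2}.$$
   Context: The Fraenkel asymmetry of $\Omega$ is $\mathcal{A}(\Omega) = \inf_{B} |B \,\Delta\, \Omega| / |\Omega|$, where the infimum is over all disks $B \subset \mathbb{R}^2$ with $|B| = |\Omega|$ and $B \,\Delta\, \Omega = (B\setminus\Omega)\cup(\Omega\setminus B)$ is the symmetric difference. *)

theory Defs
  imports "HOL-Analysis.Analysis"
begin

text \<open>Disks in the plane (closed; open and closed disks have the same area).\<close>
definition disks :: "(real^2) set set" where
  "disks = {cball x r | x r. r > 0}"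

definition fraenkel_asymmetry :: "(real^2) set \<Rightarrow> real" where
  "fraenkel_asymmetry \<Omega> =
     (INF B \<in> {B \<in> disks. measure lebesgue B = measure lebesgue \<Omega>}.
        measure lebesgue ((B - \<Omega>) \<union> (\<Omega> - B)) / measure lebesgue \<Omega>)"

end

theory Submission
  imports Defs
begin

lemma key:
  fixes \<Omega> :: "(real^2) set" and x :: "real^2"
  assumes cvx: "convex \<Omega>" and meas: "\<Omega> \<in> sets lebesgue" and m1: "measure lebesgue \<Omega> = 1"
    and rho: "\<rho> > 0" "pi * \<rho>^2 = 1"
    and D: "measure lebesgue ((cball x \<rho> - \<Omega>) \<union> (\<Omega> - cball x \<rho>)) \<le> d"
    and d: "d \<le> 1/4"
  shows "\<Omega> \<subseteq> cball x (\<rho> * (1 + 4 * sqrt d))"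
proof
  let ?B = "cball x \<rho>"
  have fin: "\<Omega> \<in> lmeasurable"
  proof (rule fmeasurableI[OF meas])
    show "emeasure lebesgue \<Omega> < \<infinity>"
      using m1 measure_zero_top by (metis infinity_ennreal_def less_top zero_neq_one)
  qed
  have Bm: "?B \<in> lmeasurable" by simp
  have fE: "emeasure lebesgue \<Omega> \<noteq> \<infinity>" and fEB: "emeasure lebesgue ?B \<noteq> \<infinity>"
    using fin Bm by (auto simp: fmeasurable_def)
  have mB: "measure lebesgue ?B = 1" using rho by (simp add: content_cball unit_ball_vol_numeral)
  have e1: "measure lebesgue (\<Omega> - ?B) = measure lebesgue \<Omega> - measure lebesgue (\<Omega> \<inter> ?B)"
  proof -
    have "\<Omega> - ?B = \<Omega> - (\<Omega> \<inter> ?B)" by auto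
    then show ?thesis using fE fEB fin Bm by (metis measure_Diff sets.Int fmeasurableD inf_le1 inf_le2)
  qed
  have e2: "measure lebesgue (?B - \<Omega>) = measure lebesgue ?B - measure lebesgue (\<Omega> \<inter> ?B)"
  proof -
    have "?B - \<Omega> = ?B - (\<Omega> \<inter> ?B)" by auto
    then show ?thesis using fE fEB fin Bm by (metis measure_Diff sets.Int fmeasurableD inf_le1 inf_le2)
  qed
  have e3: "measure lebesgue ((?B - \<Omega>) \<union> (\<Omega> - ?B)) = measure lebesgue (?B - \<Omega>) + measure lebesgue (\<Omega> - ?B)"
  proof -
    have "(?B-\<Omega>) \<inter> (\<Omega>-?B) = {}" by auto
    moreover have "?B - \<Omega> \<in> lmeasurable" "\<Omega> - ?B \<in> lmeasurable"
      using fin Bm by (auto intro: fmeasurable.Diff)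
    ultimately show ?thesis using measure_Un3[of "?B-\<Omega>" lebesgue "\<Omega>-?B"] by auto
  qed
  have mOB: "measure lebesgue (\<Omega> - ?B) \<le> d/2" using e1 e2 e3 D m1 mB by linarith
  have mOB2: "measure lebesgue (\<Omega> \<inter> ?B) \<ge> 1 - d/2" using e1 mOB m1 by linarith
  have neg: "measure lebesgue (\<Omega> - ball x \<rho>) = measure lebesgue (\<Omega> - ?B)"
  proof (rule measure_negligible_symdiff)
    show "\<Omega> - ?B \<in> lmeasurable" using fin Bm by auto
    show "negligible ((\<Omega> - ?B - (\<Omega> - ball x \<rho>)) \<union> ((\<Omega> - ball x \<rho>) - (\<Omega> - ?B)))"
      by (rule negligible_subset[OF negligible_sphere[of x \<rho>]]) auto
  qed
  fix p assume pO: "p \<in> \<Omega>"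
  show "p \<in> cball x (\<rho> * (1 + 4 * sqrt d))"
  proof (rule ccontr)
    assume "p \<notin> cball x (\<rho> * (1 + 4 * sqrt d))"
    then have far: "dist x p > \<rho> * (1 + 4 * sqrt d)" by simp
    define t where "t = dist x p - \<rho>"
    have "d \<ge> 0" using mOB measure_nonneg[of lebesgue "\<Omega> - ?B"] by linarith
    then have sd0: "sqrt d \<ge> 0" by simp
    have t4: "t > 4 * \<rho> * sqrt d" using far unfolding t_def by (simp add: algebra_simps)
    have "4*\<rho>* sqrt d \<ge> 0" using rho sd0 by (intro mult_nonneg_nonneg) auto
    then have tpos: "t > 0" using t4 by linarith
    define l where "l = t / (2*\<rho> + t)"
    have l0: "l > 0" and l1: "l < 1" using tpos rho unfolding l_def by auto
    define A where "A = \<Omega> \<inter> ?B"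
    have Am: "A \<in> lmeasurable" unfolding A_def using fin Bm by auto
    define S where "S = (\<lambda>q. l *\<^sub>R q + (1-l) *\<^sub>R p) ` A"
    have Seq: "S = (+) ((1-l) *\<^sub>R p) ` ((\<lambda>q. l *\<^sub>R q) ` A)"
      unfolding S_def image_image by (simp add: add.commute)
    have lin: "linear (\<lambda>q::real^2. l *\<^sub>R q)" by (rule linearI) (auto simp: scaleR_add_right)
    have Sm: "S \<in> lmeasurable" unfolding Seq
      by (intro measurable_translation measurable_linear_image Am lin)
    have mS: "measure lebesgue S = l^2 * measure lebesgue A"
      unfolding S_def using measure_lebesgue_affine[of l "(1-l) *\<^sub>R p" A] l0 by simp
    have sub: "S \<subseteq> \<Omega> - ball x \<rho>"
    proof
      fix y assume "y \<in> S"
      then obtain q where q: "q \<in> \<Omega>" "dist x q \<le> \<rho>" and y: "y = l *\<^sub>R q + (1-l) *\<^sub>R p"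
        unfolding S_def A_def by auto
      have "y \<in> \<Omega>" using cvx q pO l0 l1 unfolding y convex_def by auto
      moreover have "dist x y \<ge> \<rho>"
      proof -
        have "(1-l) *\<^sub>R (p - x) = (y - x) - l *\<^sub>R (q - x)" unfolding y by (simp add: algebra_simps)
        then have "norm ((1-l) *\<^sub>R (p - x)) \<le> norm (y - x) + norm (l *\<^sub>R (q - x))"
          by (metis norm_triangle_ineq4)
        moreover have "norm ((1-l) *\<^sub>R (p - x)) = (1-l) * (\<rho> + t)"
          using l1 unfolding t_def by (simp add: dist_norm norm_minus_commute)
        moreover have "norm (l *\<^sub>R (q - x)) = l * dist x q" using l0 by (simp add: dist_norm norm_minus_commute)
        moreover have "l * dist x q \<le> l * \<rho>" using q(2) l0 by (intro mult_left_mono) auto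
        ultimately have "norm (y - x) \<ge> (1-l) * (\<rho> + t) - l * \<rho>" by linarith
        moreover have "(1-l) * (\<rho> + t) - l * \<rho> = \<rho>"
        proof -
          have pos: "2*\<rho>+t > 0" using rho tpos by simp
          have l1e: "1 - l = 2*\<rho>/(2*\<rho>+t)" unfolding l_def using pos by (simp add: field_simps)
          have "(1-l)*(\<rho>+t) - l*\<rho> = (2*\<rho>*(\<rho>+t))/(2*\<rho>+t) - (t*\<rho>)/(2*\<rho>+t)"
            unfolding l1e by (simp add: l_def)
          also have "\<dots> = (2*\<rho>*(\<rho>+t) - t*\<rho>)/(2*\<rho>+t)" by (simp add: diff_divide_distrib)
          also have "(2*\<rho>*(\<rho>+t) - t*\<rho>)/(2*\<rho>+t) = \<rho>*(2*\<rho>+t)/(2*\<rho>+t)" by (simp add: algebra_simps)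
          also have "\<dots> = \<rho>" using pos by simp
          finally show ?thesis .
        qed
        ultimately show ?thesis by (simp add: dist_norm norm_minus_commute)
      qed
      ultimately show "y \<in> \<Omega> - ball x \<rho>" by auto
    qed
    have "l^2 * (1 - d/2) \<le> l^2 * measure lebesgue A" using mOB2 unfolding A_def by (simp add: mult_left_mono)
    also have "\<dots> = measure lebesgue S" using mS by simp
    also have "\<dots> \<le> measure lebesgue (\<Omega> - ball x \<rho>)"
      by (rule measure_mono_fmeasurable[OF sub]) (use Sm fin in auto)
    also have "\<dots> \<le> d/2" using neg mOB by simp
    finally have ld: "l^2 * (1 - d/2) \<le> d/2" .
    have "l^2 \<le> d"
    proof (rule ccontr)
      assume "\<not> l^2 \<le> d"
      then have "l^2 * (1 - d/2) > d * (1 - d/2)" using d by (intro mult_strict_right_mono) auto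
      moreover have "d * (1 - d/2) \<ge> d/2"
      proof -
        have "d*d \<le> d*1" using d \<open>d \<ge> 0\<close> by (intro mult_left_mono) auto
        then show ?thesis by (simp add: algebra_simps)
      qed
      ultimately show False using ld by linarith
    qed
    then have ls: "l \<le> sqrt d" by (rule real_le_rsqrt)
    have pos: "2*\<rho>+t > 0" using rho tpos by simp
    have "t = l * (2*\<rho>+t)" unfolding l_def using pos by simp
    also have "\<dots> \<le> sqrt d * (2*\<rho>+t)" using ls pos by (intro mult_right_mono) auto
    finally have tt: "t \<le> 2*\<rho>* sqrt d + t * sqrt d" by (simp add: algebra_simps)
    have "sqrt d \<le> 1/2" using d by (intro real_le_lsqrt) (auto simp: power2_eq_square)
    then have "t * sqrt d \<le> t * (1/2)" using tpos by (intro mult_left_mono) auto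
    then have "t \<le> 4 * \<rho> * sqrt d" using tt by linarith
    then show False using t4 by simp
  qed
qed

theorem lemma4:
  shows "\<exists>\<delta>0 c. \<delta>0 > 0 \<and> c > 0 \<and>
    (\<forall>\<Omega> :: (real^2) set. convex \<Omega> \<and> \<Omega> \<in> sets lebesgue \<and> measure lebesgue \<Omega> = 1
       \<and> fraenkel_asymmetry \<Omega> \<le> \<delta>0 \<longrightarrow>
       (\<exists>B \<in> disks. \<Omega> \<subseteq> B \<and> measure lebesgue B \<le> 1 + c * sqrt (fraenkel_asymmetry \<Omega>)))"
proof (intro exI conjI allI impI)
  show "(1/8::real) > 0" "(23::real) > 0" by auto
  fix \<Omega> :: "(real^2) set"
  assume H: "convex \<Omega> \<and> \<Omega> \<in> sets lebesgue \<and> measure lebesgue \<Omega> = 1 \<and> fraenkel_asymmetry \<Omega> \<le> 1/8"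
  then have cvx: "convex \<Omega>" and meas: "\<Omega> \<in> sets lebesgue" and m1: "measure lebesgue \<Omega> = 1"
    and Asm: "fraenkel_asymmetry \<Omega> \<le> 1/8" by auto
  define A where "A = fraenkel_asymmetry \<Omega>"
  define X where "X = {B \<in> disks. measure lebesgue B = measure lebesgue \<Omega>}"
  define f where "f = (\<lambda>B. measure lebesgue ((B - \<Omega>) \<union> (\<Omega> - B)) / measure lebesgue \<Omega>)"
  have Aeq: "A = (INF B\<in>X. f B)" unfolding A_def fraenkel_asymmetry_def X_def f_def by simp
  define r where "r = sqrt (1/pi)"
  have r0: "r > 0" unfolding r_def by simp
  have pr: "pi * r^2 = 1" unfolding r_def by simp
  have mball: "measure lebesgue (cball y \<rho>) = pi * \<rho>^2" if "\<rho> \<ge> 0" for y :: "real^2" and \<rho>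
    using that by (simp add: content_cball unit_ball_vol_numeral)
  have "cball 0 r \<in> X" unfolding X_def disks_def using r0 pr m1 mball[of r 0] by auto
  then have Xne: "X \<noteq> {}" by auto
  have f0: "f B \<ge> 0" for B unfolding f_def using m1 by simp
  have bdd: "bdd_below (f ` X)" using f0 by (intro bdd_belowI[of _ 0]) auto
  have A0: "A \<ge> 0" unfolding Aeq using Xne f0 by (intro cINF_greatest) auto
  have near: "\<exists>x \<rho>. \<rho> = r \<and> measure lebesgue ((cball x \<rho> - \<Omega>) \<union> (\<Omega> - cball x \<rho>)) \<le> e" if "e > A" for e
  proof -
    have "(INF B\<in>X. f B) < e" using that Aeq by simp
    then obtain B where "B \<in> X" "f B < e" using cINF_less_iff[OF Xne bdd] by auto
    then obtain x \<rho> where B: "B = cball x \<rho>" "\<rho> > 0" "measure lebesgue B = 1" and fB: "f B < e"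
      unfolding X_def disks_def using m1 by auto
    have "pi * \<rho>^2 = pi * r^2" using B mball[of \<rho> x] pr by simp
    then have "\<rho>^2 = r^2" by simp
    then have "\<rho> = r" using B(2) r0 by (simp add: power2_eq_iff_nonneg)
    then show ?thesis using B fB unfolding f_def m1 by (intro exI[of _ x] exI[of _ \<rho>]) auto
  qed
  show "\<exists>B \<in> disks. \<Omega> \<subseteq> B \<and> measure lebesgue B \<le> 1 + 23 * sqrt (fraenkel_asymmetry \<Omega>)"
  proof (cases "A > 0")
    case True
    obtain x where x: "measure lebesgue ((cball x r - \<Omega>) \<union> (\<Omega> - cball x r)) \<le> 2*A"
      using near[of "2*A"] True by auto
    define u where "u = sqrt (2*A)"
    have u0: "u \<ge> 0" unfolding u_def using A0 by simp
    have d14: "2*A \<le> 1/4" using Asm unfolding A_def by simp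
    have sub: "\<Omega> \<subseteq> cball x (r * (1 + 4 * u))"
      unfolding u_def by (rule key[OF cvx meas m1 r0 pr x d14])
    have u2: "u \<le> 1/2" unfolding u_def using d14 by (intro real_le_lsqrt) (auto simp: power2_eq_square)
    have rad: "r * (1 + 4 * u) > 0" using r0 u0 by (intro mult_pos_pos) auto
    have "measure lebesgue (cball x (r * (1 + 4 * u))) = pi * (r * (1 + 4 * u))^2"
      using mball[of "r * (1 + 4 * u)" x] rad by simp
    also have "\<dots> = (pi * r^2) * (1 + 4*u)^2" by (simp only: power_mult_distrib mult.assoc)
    also have "\<dots> = (1 + 4*u)^2" using pr by simp
    also have "\<dots> = 1 + 8*u + 16*(u*u)" by (simp add: power2_eq_square algebra_simps)
    also have "\<dots> \<le> 1 + 16 * u"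
    proof -
      have "u*u \<le> u*(1/2)" using u0 u2 by (intro mult_left_mono) auto
      then show ?thesis by linarith
    qed
    also have "1 + 16 * u = 1 + 16 * sqrt 2 * sqrt A" unfolding u_def by (simp add: real_sqrt_mult)
    also have "\<dots> \<le> 1 + 23 * sqrt A"
    proof -
      have "sqrt 2 \<le> 23/16" by (intro real_le_lsqrt) (auto simp: power2_eq_square)
      then show ?thesis using A0 by (intro add_left_mono mult_right_mono) auto
    qed
    finally have M: "measure lebesgue (cball x (r * (1 + 4 * u))) \<le> 1 + 23 * sqrt A" .
    have Dk: "cball x (r * (1 + 4 * u)) \<in> disks" unfolding disks_def using rad by blast
    show ?thesis using sub M Dk unfolding A_def by blast
  next
    case False
    then have A00: "A = 0" using A0 by simp
    have "\<forall>n::nat. \<exists>x. \<Omega> \<subseteq> cball x (r * (1 + inverse (real (Suc n))))"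
    proof
      fix n :: nat
      define d where "d = (inverse (4 * real (Suc n)))^2"
      have dpos: "d > 0" unfolding d_def by simp
      obtain x where x: "measure lebesgue ((cball x r - \<Omega>) \<union> (\<Omega> - cball x r)) \<le> d"
        using near[of d] dpos A00 by auto
      have sd: "sqrt d = inverse (4 * real (Suc n))" unfolding d_def by simp
      have i0: "0 \<le> inverse (4 * real (Suc n))" by simp
      have i1: "inverse (4 * real (Suc n)) \<le> inverse 4" by (rule le_imp_inverse_le) auto
      have "d \<le> (inverse 4)^2" unfolding d_def by (rule power_mono[OF i1 i0])
      then have dd: "d \<le> 1/4" by (simp add: power2_eq_square)
      have s4: "4 * sqrt d = inverse (real (Suc n))" unfolding sd by (simp only: inverse_mult_distrib mult.assoc[symmetric]) simp
      show "\<exists>x. \<Omega> \<subseteq> cball x (r * (1 + inverse (real (Suc n))))"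
        using key[OF cvx meas m1 r0 pr x dd] unfolding s4 by blast
    qed
    then obtain Y where Y: "\<And>n. \<Omega> \<subseteq> cball (Y n) (r * (1 + inverse (real (Suc n))))" by metis
    have "\<Omega> \<noteq> {}" using m1 by auto
    then obtain p0 where p0: "p0 \<in> \<Omega>" by auto
    have inv1: "inverse (real (Suc n)) \<le> 1" for n using le_imp_inverse_le[of 1 "real (Suc n)"] by simp
    have Yin: "Y n \<in> cball p0 (2*r)" for n
    proof -
      have "dist (Y n) p0 \<le> r * (1 + inverse (real (Suc n)))" using Y[of n] p0 by auto
      also have "\<dots> \<le> r * 2" using r0 inv1[of n] by (intro mult_left_mono) auto
      finally show ?thesis by (simp add: dist_commute)
    qed
    have sc: "seq_compact (cball p0 (2*r))" by (intro compact_imp_seq_compact compact_cball)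
    obtain x0 \<sigma> where "x0 \<in> cball p0 (2*r)" and sm: "strict_mono \<sigma>" and lim: "(Y \<circ> \<sigma>) \<longlonglongrightarrow> x0"
      using seq_compactE[OF sc, of Y] Yin by blast
    have "\<Omega> \<subseteq> cball x0 r"
    proof
      fix p assume pO: "p \<in> \<Omega>"
      have l1: "(\<lambda>n. dist ((Y \<circ> \<sigma>) n) p) \<longlonglongrightarrow> dist x0 p"
        by (intro tendsto_dist lim tendsto_const)
      have l2: "(\<lambda>n. r * (1 + inverse (real (Suc n)))) \<longlonglongrightarrow> r * (1 + 0)"
        by (intro tendsto_mult tendsto_add tendsto_const LIMSEQ_inverse_real_of_nat)
      have "dist ((Y \<circ> \<sigma>) n) p \<le> r * (1 + inverse (real (Suc n)))" for n
      proof -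
        have "dist ((Y \<circ> \<sigma>) n) p \<le> r * (1 + inverse (real (Suc (\<sigma> n))))" using Y[of "\<sigma> n"] pO by auto
        also have "\<dots> \<le> r * (1 + inverse (real (Suc n)))"
          using seq_suble[OF sm, of n] r0 by (intro mult_left_mono add_left_mono le_imp_inverse_le) auto
        finally show ?thesis .
      qed
      then have "dist x0 p \<le> r * (1 + 0)" by (intro LIMSEQ_le[OF l1 l2]) auto
      then show "p \<in> cball x0 r" by simp
    qed
    moreover have "measure lebesgue (cball x0 r) = 1" using mball[of r x0] r0 pr by simp
    moreover have "cball x0 r \<in> disks" unfolding disks_def using r0 by blast
    ultimately show ?thesis unfolding A_def[symmetric] A00 by (intro bexI[of _ "cball x0 r"]) auto
  qed
qed
end
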